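(* Let $d\ge 1$, $\mu\ge 0$ and $K\ge 2$ be integers, let $T$ be a scalar, and use the convention $0^0=1$. For each $j\in\{0,1,\ldots,K-2\}$ let vectors (all in a common vector space) $\Lambda_j^{(p)}$, $p=0,1,\ldots,d$, and $N_{l,j}$, $l=j+1,\ldots,j+\mu+1$, be given, with $N_{j+\mu+1,j}=\Lambda_j^{(0)}$. For integers $l$ and $k\ge 0$ define the local coefficient of time interval $l$ after processing the intervals $0,\ldots,k$ by $$\mathbf{L}_l^{[k]}:=\sum_{\substack{0\le j\le k\\ l-\mu-1\le j\le l-1}} N_{l,j}\;+\;\sum_{\substack{0\le j\le k\\ j\le l-\mu-2}}\ \sum_{p=0}^d \Lambda_j^{(p)}\,(l-j-\mu-1)^p\,T^p .$$ For $k\ge -1$, $p\in\{1,\ldots,d\}$ and $m\ge 0$ define $$\mathbf{L}^{(p)}_{k+\mu+1}:=\sum_{l=0}^{k}\Lambda_l^{(p)}\big((k+1-l)^p-(k-l)^p\big),\qquad \mathbf{L}^{(p,m)}_{k+\mu+1}:=\sum_{l=0}^{k}\Lambda_l^{(p)}\,l^m,$$ (empty sums, e.g. for $k=-1$, being $0$), and $$c_m^p(k):=\binom{p}{m}\Big((k-1)^{p-m}-2k^{p-m}+(k+1)^{p-m}\Big)(-1)^m .$$ Then for every $k\in\{0,1,\ldots,K-2\}$: (i) $\mathbf{L}_{k+\mu+2}^{[k]}=\mathbf{L}_{k+\mu+1}^{[k]}+\sum_{p=1}^d \mathbf{L}^{(p)}_{k+\mu+1}T^p$; (ii) for $p=1,\ldots,d$,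 $\mathbf{L}^{(p)}_{k+\mu+1}=\mathbf{L}^{(p)}_{(k-1)+\mu+1}+\Lambda_k^{(p)}+\sum_{m=0}^{p-2}c_m^p(k)\,\mathbf{L}^{(p,m)}_{(k-1)+\mu+1}$; (iii) for $p=2,\ldots,d$ and $m=0,\ldots,p-2$, $\mathbf{L}^{(p,m)}_{k+\mu+1}=\mathbf{L}^{(p,m)}_{(k-1)+\mu+1}+\Lambda_k^{(p)}\,k^m$. Consequently the local coefficients can be computed with a number of operations per time interval independent of $k$, i.e. with total cost $O(K)$.
   Context: This formalizes the multipole-to-local (M2L) translation of a space-time fast multipole method for a wave-type kernel $U(\mathbf{x},\mathbf{y},t,s)=(c(t-s)-r)_+^d/r$, $r=|\mathbf{x}-\mathbf{y}|$, with time axis split into intervals $I_0,\ldots,I_{K-1}$ of length $2h_t$ and $T=c\cdot 2h_t$. In the paper, $N_{l,j}=\mathbf{U}_{l,j}\mathbf{M}_j$ is the near-future M2L contribution of the moment $\mathbf{M}_j$ of interval $I_j$ to the local coefficient of interval $I_l$ ($j+1\le l\le j+\mu+1$), and $\Lambda_j^{(p)}=\mathbf{L}^{(p)}_{j+\mu+1,j}=\mathbf{U}^{(p)}_{j+\mu+1,j}\mathbf{M}_j$ is the contribution of $\mathbf{M}_j$ to the $p$th Taylor (binomial) coefficient of the kernel expanded at interval $I_{j+\mu+1}$, where $\mathbf{U}^{(p)}$ is the matrix of $\frac{1}{c^p p!}\partial_t^p U$ at the interpolation nodes and $\mathbf{U}^{(0)}_{l,j}=\mathbf{U}_{l,j}$;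 the distant-future contribution of $I_j$ to $I_l$, $l\ge j+\mu+2$, is $\sum_{p=0}^d\Lambda_j^{(p)}(l-j-\mu-1)^pT^p$. $\mathbf{L}^{(p)}_{k+\mu+1}$ is called the derivative of local coefficient and $\mathbf{L}^{(p,m)}_{k+\mu+1}$ the auxiliary local coefficient. *)

theory Defs
  imports Complex_Main
begin

text \<open>Data: N l j is N_{l,j}; Lam j p is Lambda_j^(p). Vectors live in a real vector space.\<close>

text \<open>Local coefficient L_l^[k] (l, k naturals; only nonnegative l are needed).\<close>
definition loc_coeff ::
  "(nat \<Rightarrow> nat \<Rightarrow> 'v::real_vector) \<Rightarrow> (nat \<Rightarrow> nat \<Rightarrow> 'v) \<Rightarrow> nat \<Rightarrow> nat \<Rightarrow> real \<Rightarrow> nat \<Rightarrow> nat \<Rightarrow> 'v"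
  where "loc_coeff N Lam \<mu> d T l k =
    (\<Sum>j\<in>{j. j \<le> k \<and> int l - int \<mu> - 1 \<le> int j \<and> int j \<le> int l - 1}. N l j)
    + (\<Sum>j\<in>{j. j \<le> k \<and> int j \<le> int l - int \<mu> - 2}.
         \<Sum>p\<le>d. ((of_int (int l - int j - int \<mu> - 1)) ^ p * T ^ p) *\<^sub>R Lam j p)"

text \<open>Derivative of local coefficient L^(p)_{k+mu+1}, for integer k \<ge> -1 (empty sum for k = -1).\<close>
definition deriv_loc :: "(nat \<Rightarrow> nat \<Rightarrow> 'v::real_vector) \<Rightarrow> nat \<Rightarrow> int \<Rightarrow> 'v"
  where "deriv_loc Lam p k =
    (\<Sum>l<nat (k + 1). ((of_int (k + 1 - int l)) ^ p - (of_int (k - int l)) ^ p) *\<^sub>R Lam l p)"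

text \<open>Auxiliary local coefficient L^(p,m)_{k+mu+1}, for integer k \<ge> -1.\<close>
definition aux_loc :: "(nat \<Rightarrow> nat \<Rightarrow> 'v::real_vector) \<Rightarrow> nat \<Rightarrow> nat \<Rightarrow> int \<Rightarrow> 'v"
  where "aux_loc Lam p m k = (\<Sum>l<nat (k + 1). (real l ^ m) *\<^sub>R Lam l p)"

definition cmp :: "nat \<Rightarrow> nat \<Rightarrow> nat \<Rightarrow> real"
  where "cmp p m k = real (p choose m) *
    ((real k - 1) ^ (p - m) - 2 * real k ^ (p - m) + (real k + 1) ^ (p - m)) * (-1) ^ m"

end

theory Submission
  imports Defs
begin

lemma binom_sub: "((a::real) - y)^p = (\<Sum>m\<le>p. real (p choose m) * (-1)^m * y^m * a^(p-m))"
proof -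
  have "(a - y)^p = ((-y) + a)^p" by simp
  also have "\<dots> = (\<Sum>m\<le>p. real (p choose m) * (-y)^m * a^(p-m))" by (rule binomial_ring)
  also have "\<dots> = (\<Sum>m\<le>p. real (p choose m) * (-1)^m * y^m * a^(p-m))"
  proof (rule sum.cong)
    fix m
    have "(-y)^m = (-1)^m * y^m" by (rule power_minus)
    then show "real (p choose m) * (-y)^m * a^(p-m) = real (p choose m) * (-1)^m * y^m * a^(p-m)"
      by (simp only: mult.assoc)
  qed simp
  finally show ?thesis .
qed
lemma scal_id:
  fixes x y :: real assumes "p \<ge> 1"
  shows "(x+1-y)^p - 2*(x-y)^p + (x-1-y)^p =
    (\<Sum>m<p-1. real (p choose m) * ((x-1)^(p-m) - 2*x^(p-m) + (x+1)^(p-m)) * (-1)^m * y^m)"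
proof -
  define f where "f m = real (p choose m) * ((x-1)^(p-m) - 2*x^(p-m) + (x+1)^(p-m)) * (-1)^m * y^m" for m
  have "(x+1-y)^p - 2*(x-y)^p + (x-1-y)^p = (\<Sum>m\<le>p. f m)"
  proof -
    have "(x+1-y)^p - 2*(x-y)^p + (x-1-y)^p =
      (\<Sum>m\<le>p. real (p choose m) * (-1)^m * y^m * (x+1)^(p-m))
      - 2 * (\<Sum>m\<le>p. real (p choose m) * (-1)^m * y^m * x^(p-m))
      + (\<Sum>m\<le>p. real (p choose m) * (-1)^m * y^m * (x-1)^(p-m))"
      by (simp only: binom_sub[of "x+1" y p] binom_sub[of x y p] binom_sub[of "x-1" y p])
    also have "\<dots> = (\<Sum>m\<le>p. f m)"
      unfolding f_def sum_distrib_left sum_subtractf[symmetric] sum.distrib[symmetric]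
      by (rule sum.cong) (simp_all add: algebra_simps)
    finally show ?thesis .
  qed
  also have "\<dots> = (\<Sum>m<p-1. f m)"
  proof -
    obtain q where q: "p = Suc q" using assms by (cases p) auto
    have "(\<Sum>m\<le>p. f m) = (\<Sum>m<q. f m) + f q + f p"
      by (simp add: q lessThan_Suc_atMost[symmetric])
    moreover have "f p = 0" by (simp add: f_def)
    moreover have "f q = 0" by (simp add: f_def q)
    ultimately show ?thesis by (simp add: q)
  qed
  finally show ?thesis unfolding f_def .
qed

lemma nat_suc_int[simp]: "nat (int k + 1) = Suc k" "nat (1 + int k) = Suc k"
  by simp_all

lemma part3:
  fixes Lam :: "nat \<Rightarrow> nat \<Rightarrow> 'v::real_vector"
  shows "aux_loc Lam p m (int k) = aux_loc Lam p m (int k - 1) + (real k ^ m) *\<^sub>R Lam k p"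
  unfolding aux_loc_def by simp

lemma part2:
  fixes Lam :: "nat \<Rightarrow> nat \<Rightarrow> 'v::real_vector"
  assumes p: "p \<ge> 1"
  shows "deriv_loc Lam p (int k) =
           deriv_loc Lam p (int k - 1) + Lam k p
           + (\<Sum>m<p - 1. cmp p m k *\<^sub>R aux_loc Lam p m (int k - 1))"
proof -
  have e1: "deriv_loc Lam p (int k) = (\<Sum>l<k. ((real k + 1 - real l)^p - (real k - real l)^p) *\<^sub>R Lam l p) + Lam k p"
    unfolding deriv_loc_def using p by (simp add: algebra_simps)
  have e2: "deriv_loc Lam p (int k - 1) = (\<Sum>l<k. ((real k - real l)^p - (real k - 1 - real l)^p) *\<^sub>R Lam l p)"
    unfolding deriv_loc_def by (simp add: algebra_simps)
  have e3: "(\<Sum>m<p - 1. cmp p m k *\<^sub>R aux_loc Lam p m (int k - 1))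
     = (\<Sum>l<k. (\<Sum>m<p - 1. cmp p m k * real l ^ m) *\<^sub>R Lam l p)"
    unfolding aux_loc_def scaleR_sum_right scaleR_scaleR scaleR_sum_left by (simp only: diff_add_cancel nat_int, rule sum.swap)
  have e4: "((real k + 1 - real l)^p - (real k - real l)^p) =
     ((real k - real l)^p - (real k - 1 - real l)^p) + (\<Sum>m<p - 1. cmp p m k * real l ^ m)" for l
  proof -
    have "(real k+1-real l)^p - 2*(real k-real l)^p + (real k-1-real l)^p = (\<Sum>m<p - 1. cmp p m k * real l ^ m)"
      unfolding scal_id[OF p] cmp_def by simp
    then show ?thesis by simp
  qed
  show ?thesis unfolding e1 e2 e3 e4
    by (simp add: scaleR_add_left sum.distrib sum_subtractf scaleR_diff_left)
qed

lemma part1: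
  fixes N Lam :: "nat \<Rightarrow> nat \<Rightarrow> 'v::real_vector"
  assumes hk: "N (k + \<mu> + 1) k = Lam k 0"
  shows "loc_coeff N Lam \<mu> d T (k + \<mu> + 2) k =
           loc_coeff N Lam \<mu> d T (k + \<mu> + 1) k + (\<Sum>p\<in>{1..d}. T ^ p *\<^sub>R deriv_loc Lam p (int k))"
proof -
  have s1: "{j. j \<le> k \<and> int (k + \<mu> + 2) - int \<mu> - 1 \<le> int j \<and> int j \<le> int (k + \<mu> + 2) - 1} = {}" by auto
  have s2: "{j. j \<le> k \<and> int j \<le> int (k + \<mu> + 2) - int \<mu> - 2} = {..<Suc k}" by auto
  have s3: "{j. j \<le> k \<and> int (k + \<mu> + 1) - int \<mu> - 1 \<le> int j \<and> int j \<le> int (k + \<mu> + 1) - 1} = {k}" by auto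
  have s4: "{j. j \<le> k \<and> int j \<le> int (k + \<mu> + 1) - int \<mu> - 2} = {..<k}" by auto
  define g where "g l = (\<Sum>p\<in>{1..d}. ((real k - real l) ^ p * T ^ p) *\<^sub>R Lam l p)" for l
  define h where "h l = (\<Sum>p\<in>{1..d}. ((real k + 1 - real l) ^ p * T ^ p) *\<^sub>R Lam l p)" for l
  have split0: "(\<Sum>p\<le>d. F p) = F 0 + (\<Sum>p\<in>{1..d}. F p)" for F :: "nat \<Rightarrow> 'v"
  proof -
    have "{..d} = insert 0 {1..d}" by auto
    then show ?thesis by simp
  qed
  have A: "loc_coeff N Lam \<mu> d T (k + \<mu> + 2) k = (\<Sum>l<Suc k. Lam l 0 + h l)"
    unfolding loc_coeff_def s1 s2 h_def
    by (simp add: split0 algebra_simps of_nat_diff)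
  have gk: "g k = 0" unfolding g_def by (intro sum.neutral) auto
  have B: "loc_coeff N Lam \<mu> d T (k + \<mu> + 1) k = (\<Sum>l<Suc k. Lam l 0 + g l)"
  proof -
    have "loc_coeff N Lam \<mu> d T (k + \<mu> + 1) k = Lam k 0 + (\<Sum>l<k. Lam l 0 + g l)"
      unfolding loc_coeff_def s3 s4 g_def using hk
      by (simp add: split0 algebra_simps)
    then show ?thesis using gk by (simp add: algebra_simps)
  qed
  have C: "(\<Sum>p\<in>{1..d}. T ^ p *\<^sub>R deriv_loc Lam p (int k)) = (\<Sum>l<Suc k. h l - g l)"
  proof -
    have "(\<Sum>p\<in>{1..d}. T ^ p *\<^sub>R deriv_loc Lam p (int k)) = (\<Sum>p\<in>{1..d}. \<Sum>l<Suc k.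
       ((real k+1-real l)^p*T^p) *\<^sub>R Lam l p - ((real k - real l)^p*T^p) *\<^sub>R Lam l p)"
      unfolding deriv_loc_def
      by (intro sum.cong refl) (simp add: scaleR_sum_right algebra_simps scaleR_diff_left del: sum.lessThan_Suc)
    also have "\<dots> = (\<Sum>l<Suc k. \<Sum>p\<in>{1..d}.
       ((real k+1-real l)^p*T^p) *\<^sub>R Lam l p - ((real k - real l)^p*T^p) *\<^sub>R Lam l p)"
      by (rule sum.swap)
    also have "\<dots> = (\<Sum>l<Suc k. h l - g l)"
      unfolding g_def h_def by (simp only: sum_subtractf)
    finally show ?thesis .
  qed
  show ?thesis unfolding A B C by (simp add: sum.distrib[symmetric] sum_subtractf[symmetric] algebra_simps)
qed

theorem mainTheorem1:
  fixes N Lam :: "nat \<Rightarrow> nat \<Rightarrow> 'v::real_vector"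
    and d \<mu> K k :: nat and T :: real
  assumes "d \<ge> 1" and "K \<ge> 2"
    and hN: "\<And>j. j \<le> K - 2 \<Longrightarrow> N (j + \<mu> + 1) j = Lam j 0"
    and k: "k \<le> K - 2"
  shows "(loc_coeff N Lam \<mu> d T (k + \<mu> + 2) k =
           loc_coeff N Lam \<mu> d T (k + \<mu> + 1) k + (\<Sum>p\<in>{1..d}. T ^ p *\<^sub>R deriv_loc Lam p (int k)))
    \<and> (\<forall>p\<in>{1..d}. deriv_loc Lam p (int k) =
           deriv_loc Lam p (int k - 1) + Lam k p
           + (\<Sum>m<p - 1. cmp p m k *\<^sub>R aux_loc Lam p m (int k - 1)))
    \<and> (\<forall>p\<in>{2..d}. \<forall>m\<le>p - 2. aux_loc Lam p m (int k) =
           aux_loc Lam p m (int k - 1) + (real k ^ m) *\<^sub>R Lam k p)"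
  using part1[of N k \<mu> Lam d T, OF hN[OF k]] part2 part3 by auto

end
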